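(* For $i=1,2$ let $(\sigma_i,\varepsilon_i)$ be admissible pairs of $K$ and $q_i:V\to\overline K^{\sigma_i,\varepsilon_i}/\overline R_i$ non-trivial generalized $(\sigma_i,\varepsilon_i)$-quadratic forms with $S_{q_1}=S_{q_2}$. Assume that the polar space $S:=S_{q_1}=S_{q_2}$ has non-degenerate rank at least $2$. Then $q_1$ and $q_2$ are proportional: there is $\kappa\in K\setminus\{0\}$ such that $\sigma_2(t)=\kappa\sigma_1(t)\kappa^{-1}$ for all $t$, $\varepsilon_2=\kappa\kappa^{-\sigma_1}\varepsilon_1$, $\overline R_2=\kappa\overline R_1$, and $q_2(x)=\kappa q_1(x)$ for all $x\in V$.
   Context: $K$ division ring, $V$ right $K$-vector space. Admissible pair $(\sigma,\varepsilon)$: $\sigma$ anti-automorphism, $\varepsilon^\sigma\varepsilon=1$, $t^{\sigma^2}=\varepsilon t\varepsilon^{-1}$. $K_{\sigma,\varepsilon}=\{t-t^\sigma\varepsilon\}$, $\overline K^{\sigma,\varepsilon}=K/K_{\sigma,\varepsilon}$, $\bar t$ class of $t$, $\bar t\circ\lambda=\overline{\lambda^\sigma t\lambda}$; closed subgroups: stable under all $\circ\lambda$. If $(\sigma_2,\varepsilon_2)$ is obtained from $(\sigma_1,\varepsilon_1)$ via $\kappa$ as in the claim, then $\kappa K_{\sigma_1,\varepsilon_1}=K_{\sigma_2,\varepsilon_2}$, so left multiplication by $\kappa$ induces a group isomorphism $\overline K^{\sigma_1,\varepsilon_1}\to\overline K^{\sigma_2,\varepsilon_2}$; $\kappa\overline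 R_1$ and $\kappa q_1(x)$ are understood via this map. A generalized $(\sigma,\varepsilon)$-quadratic form with co-defect closed $\overline R$: $q:V\to\overline K^{\sigma,\varepsilon}/\overline R$ with $q(x\lambda)=q(x)\circ\lambda$ and a trace-valued $(\sigma,\varepsilon)$-sesquilinear $f$ ($f(x\lambda,y\mu)=\lambda^\sigma f(x,y)\mu$, $f(y,x)=f(x,y)^\sigma\varepsilon$, $f(x,x)\in\{t+t^\sigma\varepsilon\}$) with $q(x+y)=q(x)+q(y)+(\overline{f(x,y)}+\overline R)$. Non-trivial: not identically $\overline R$. $S_q$: the point-line geometry of points $[x]$ with $q(x)=\overline R$ and lines of $\mathrm{PG}(V)$ consisting of such points; it is a polar space. The non-degenerate rank of a polar space is the rank of its quotient over its radical. *)

theory Defs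
  imports Main "HOL-Library.Set_Algebras"
begin

(* Right K-vector space V = type 'v :: ab_group_add with a right scalar *)
(* multiplication sm x \<lambda> = x\<lambda>.                                        *)

definition right_vector_space :: "('v::ab_group_add \<Rightarrow> 'k::division_ring \<Rightarrow> 'v) \<Rightarrow> bool" where
  "right_vector_space sm \<longleftrightarrow>
     (\<forall>x. sm x 1 = x) \<and>
     (\<forall>x a b. sm x (a * b) = sm (sm x a) b) \<and>
     (\<forall>x y a. sm (x + y) a = sm x a + sm y a) \<and>
     (\<forall>x a b. sm x (a + b) = sm x a + sm x b)"

definition anti_automorphism :: "('k::division_ring \<Rightarrow> 'k) \<Rightarrow> bool" where
  "anti_automorphism \<sigma> \<longleftrightarrow> bij \<sigma> \<and>
     (\<forall>a b. \<sigma> (a + b) = \<sigma> a + \<sigma> b) \<and>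
     (\<forall>a b. \<sigma> (a * b) = \<sigma> b * \<sigma> a)"

definition admissible :: "('k::division_ring \<Rightarrow> 'k) \<Rightarrow> 'k \<Rightarrow> bool" where
  "admissible \<sigma> \<epsilon> \<longleftrightarrow> anti_automorphism \<sigma> \<and> \<sigma> \<epsilon> * \<epsilon> = 1 \<and>
     (\<forall>t. \<sigma> (\<sigma> t) = \<epsilon> * t * inverse \<epsilon>)"

definition Ksig :: "('k::division_ring \<Rightarrow> 'k) \<Rightarrow> 'k \<Rightarrow> 'k set" where
  "Ksig \<sigma> \<epsilon> = {t - \<sigma> t * \<epsilon> | t. True}"

(* the class \<bar>t of t in \<bar>K^{\<sigma>,\<epsilon>} = K / K_{\<sigma>,\<epsilon>} (a coset, i.e. a subset of K) *)
definition kbar :: "('k::division_ring \<Rightarrow> 'k) \<Rightarrow> 'k \<Rightarrow> 'k \<Rightarrow> 'k set" where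
  "kbar \<sigma> \<epsilon> t = t +o Ksig \<sigma> \<epsilon>"

(* the group \<bar>K^{\<sigma>,\<epsilon>}, as the set of all classes; its addition is the
   pointwise sum of cosets (Set_Algebras) *)
definition Kbar :: "('k::division_ring \<Rightarrow> 'k) \<Rightarrow> 'k \<Rightarrow> 'k set set" where
  "Kbar \<sigma> \<epsilon> = range (kbar \<sigma> \<epsilon>)"

(* X \<circ> \<lambda> on \<bar>K: for X = \<bar>t this is \<bar>(\<lambda>^\<sigma> t \<lambda>) *)
definition circ :: "('k::division_ring \<Rightarrow> 'k) \<Rightarrow> 'k \<Rightarrow> 'k set \<Rightarrow> 'k \<Rightarrow> 'k set" where
  "circ \<sigma> \<epsilon> X l = (\<lambda>t. \<sigma> l * t * l) ` X + Ksig \<sigma> \<epsilon>"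

definition closed_subgroup :: "('k::division_ring \<Rightarrow> 'k) \<Rightarrow> 'k \<Rightarrow> 'k set set \<Rightarrow> bool" where
  "closed_subgroup \<sigma> \<epsilon> Rb \<longleftrightarrow>
     Rb \<subseteq> Kbar \<sigma> \<epsilon> \<and> kbar \<sigma> \<epsilon> 0 \<in> Rb \<and>
     (\<forall>s t. kbar \<sigma> \<epsilon> s \<in> Rb \<longrightarrow> kbar \<sigma> \<epsilon> t \<in> Rb \<longrightarrow> kbar \<sigma> \<epsilon> (s - t) \<in> Rb) \<and>
     (\<forall>X l. X \<in> Rb \<longrightarrow> circ \<sigma> \<epsilon> X l \<in> Rb)"

definition Kquot :: "('k::division_ring \<Rightarrow> 'k) \<Rightarrow> 'k \<Rightarrow> 'k set set \<Rightarrow> 'k set set set" where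
  "Kquot \<sigma> \<epsilon> Rb = {X +o Rb | X. X \<in> Kbar \<sigma> \<epsilon>}"

definition circq :: "('k::division_ring \<Rightarrow> 'k) \<Rightarrow> 'k \<Rightarrow> 'k set set \<Rightarrow> 'k set set \<Rightarrow> 'k \<Rightarrow> 'k set set" where
  "circq \<sigma> \<epsilon> Rb Q l = (\<lambda>X. circ \<sigma> \<epsilon> X l) ` Q + Rb"

definition trace_valued_sesquilinear ::
  "('v::ab_group_add \<Rightarrow> 'k::division_ring \<Rightarrow> 'v) \<Rightarrow> ('k \<Rightarrow> 'k) \<Rightarrow> 'k \<Rightarrow> ('v \<Rightarrow> 'v \<Rightarrow> 'k) \<Rightarrow> bool" where
  "trace_valued_sesquilinear sm \<sigma> \<epsilon> f \<longleftrightarrow>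
     (\<forall>x x' y. f (x + x') y = f x y + f x' y) \<and>
     (\<forall>x y y'. f x (y + y') = f x y + f x y') \<and>
     (\<forall>x y a b. f (sm x a) (sm y b) = \<sigma> a * f x y * b) \<and>
     (\<forall>x y. f y x = \<sigma> (f x y) * \<epsilon>) \<and>
     (\<forall>x. f x x \<in> {t + \<sigma> t * \<epsilon> | t. True})"

definition gen_quadratic_form ::
  "('v::ab_group_add \<Rightarrow> 'k::division_ring \<Rightarrow> 'v) \<Rightarrow> ('k \<Rightarrow> 'k) \<Rightarrow> 'k \<Rightarrow> 'k set set
     \<Rightarrow> ('v \<Rightarrow> 'k set set) \<Rightarrow> bool" where
  "gen_quadratic_form sm \<sigma> \<epsilon> Rb q \<longleftrightarrow>
     closed_subgroup \<sigma> \<epsilon> Rb \<and>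
     (\<forall>x. q x \<in> Kquot \<sigma> \<epsilon> Rb) \<and>
     (\<forall>x l. q (sm x l) = circq \<sigma> \<epsilon> Rb (q x) l) \<and>
     (\<exists>f. trace_valued_sesquilinear sm \<sigma> \<epsilon> f \<and>
          (\<forall>x y. q (x + y) = q x + q y + (kbar \<sigma> \<epsilon> (f x y) +o Rb)))"

(* non-trivial: q is not identically \<bar>R (the zero of the quotient) *)
definition nontrivial_qform :: "('v \<Rightarrow> 'k set set) \<Rightarrow> 'k set set \<Rightarrow> bool" where
  "nontrivial_qform q Rb \<longleftrightarrow> (\<exists>x. q x \<noteq> Rb)"

(* Projective space PG(V): points are 1-dimensional subspaces.         *)

definition pt :: "('v \<Rightarrow> 'k \<Rightarrow> 'v) \<Rightarrow> 'v \<Rightarrow> 'v set" where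
  "pt sm x = range (sm x)"

definition pline :: "('v::ab_group_add \<Rightarrow> 'k::division_ring \<Rightarrow> 'v) \<Rightarrow> 'v \<Rightarrow> 'v \<Rightarrow> 'v set set" where
  "pline sm x y = {pt sm (sm x a + sm y b) | a b. sm x a + sm y b \<noteq> 0}"

definition Sq_points :: "('v::ab_group_add \<Rightarrow> 'k::division_ring \<Rightarrow> 'v) \<Rightarrow> ('v \<Rightarrow> 'k set set) \<Rightarrow> 'k set set
     \<Rightarrow> 'v set set" where
  "Sq_points sm q Rb = {pt sm x | x. x \<noteq> 0 \<and> q x = Rb}"

definition Sq_lines :: "('v::ab_group_add \<Rightarrow> 'k::division_ring \<Rightarrow> 'v) \<Rightarrow> ('v \<Rightarrow> 'k set set) \<Rightarrow> 'k set set
     \<Rightarrow> 'v set set set" where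
  "Sq_lines sm q Rb = {pline sm x y | x y. x \<noteq> 0 \<and> y \<noteq> 0 \<and> pt sm x \<noteq> pt sm y \<and>
                                          pline sm x y \<subseteq> Sq_points sm q Rb}"

definition Sq :: "('v::ab_group_add \<Rightarrow> 'k::division_ring \<Rightarrow> 'v) \<Rightarrow> ('v \<Rightarrow> 'k set set) \<Rightarrow> 'k set set
     \<Rightarrow> 'v set set \<times> 'v set set set" where
  "Sq sm q Rb = (Sq_points sm q Rb, Sq_lines sm q Rb)"

definition collinear :: "'p set set \<Rightarrow> 'p \<Rightarrow> 'p \<Rightarrow> bool" where
  "collinear L p r \<longleftrightarrow> p = r \<or> (\<exists>l\<in>L. p \<in> l \<and> r \<in> l)"

definition radical :: "'p set \<Rightarrow> 'p set set \<Rightarrow> 'p set" where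
  "radical P L = {p \<in> P. \<forall>r\<in>P. collinear L p r}"

definition subspace :: "'p set \<Rightarrow> 'p set set \<Rightarrow> 'p set \<Rightarrow> bool" where
  "subspace P L X \<longleftrightarrow> X \<subseteq> P \<and> (\<forall>l\<in>L. card (l \<inter> X) \<ge> 2 \<or> infinite (l \<inter> X) \<longrightarrow> l \<subseteq> X)"

definition singular_subspace :: "'p set \<Rightarrow> 'p set set \<Rightarrow> 'p set \<Rightarrow> bool" where
  "singular_subspace P L X \<longleftrightarrow> subspace P L X \<and> (\<forall>p\<in>X. \<forall>r\<in>X. collinear L p r)"

definition gen_subspace :: "'p set \<Rightarrow> 'p set set \<Rightarrow> 'p set \<Rightarrow> 'p set" where
  "gen_subspace P L A = \<Inter>{X. subspace P L X \<and> A \<subseteq> X}"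

(* quotient geometry S/Rad(S): points <Rad,p> (p not in Rad), lines <Rad,l>
   (l disjoint from Rad), the latter viewed as sets of quotient points *)
definition quot_points :: "'p set \<Rightarrow> 'p set set \<Rightarrow> 'p set set" where
  "quot_points P L = {gen_subspace P L (radical P L \<union> {p}) | p. p \<in> P - radical P L}"

definition quot_lines :: "'p set \<Rightarrow> 'p set set \<Rightarrow> 'p set set set" where
  "quot_lines P L = {{Q \<in> quot_points P L. Q \<subseteq> gen_subspace P L (radical P L \<union> l)} | l.
                      l \<in> L \<and> l \<inter> radical P L = {}}"

definition rank_ge2 :: "'p set \<Rightarrow> 'p set set \<Rightarrow> bool" where
  "rank_ge2 P L \<longleftrightarrow> (\<exists>X0 X1. singular_subspace P L X0 \<and> singular_subspace P L X1 \<and>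
                                {} \<subset> X0 \<and> X0 \<subset> X1)"

definition nondeg_rank_ge2 :: "'p set \<times> 'p set set \<Rightarrow> bool" where
  "nondeg_rank_ge2 S \<longleftrightarrow> rank_ge2 (quot_points (fst S) (snd S)) (quot_lines (fst S) (snd S))"

end

theory Submission imports Defs begin

section \<open>Anti-automorphisms\<close>

locale antiaut =
  fixes \<sigma> :: "'k::division_ring \<Rightarrow> 'k"
  assumes aa: "anti_automorphism \<sigma>"
begin
lemma bij: "bij \<sigma>" using aa by (simp add: anti_automorphism_def)
lemma add[simp]: "\<sigma> (a + b) = \<sigma> a + \<sigma> b" using aa by (simp add: anti_automorphism_def)
lemma mult[simp]: "\<sigma> (a * b) = \<sigma> b * \<sigma> a" using aa by (simp add: anti_automorphism_def)
lemma zero[simp]: "\<sigma> 0 = 0"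
  using add[of 0 0] by simp
lemma minus[simp]: "\<sigma> (- a) = - \<sigma> a"
proof -
  have "\<sigma> a + \<sigma> (- a) = 0" using add[of a "-a"] by simp
  then show ?thesis by (rule minus_unique[symmetric])
qed
lemma diff[simp]: "\<sigma> (a - b) = \<sigma> a - \<sigma> b"
  using add[of a "-b"] by simp
lemma eq_iff[simp]: "\<sigma> a = \<sigma> b \<longleftrightarrow> a = b"
  using bij by (meson bij_def inj_eq)
lemma zero_iff[simp]: "\<sigma> a = 0 \<longleftrightarrow> a = 0"
  using eq_iff[of a 0] by simp
lemma one[simp]: "\<sigma> 1 = 1"
proof -
  have "\<sigma> 1 = \<sigma> 1 * \<sigma> 1" using mult[of 1 1] by simp
  moreover have "\<sigma> 1 \<noteq> 0" by simp
  ultimately show ?thesis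
    by (metis mult_cancel_right2)
qed
lemma inv[simp]: "\<sigma> (inverse a) = inverse (\<sigma> a)"
proof (cases "a = 0")
  case True then show ?thesis by simp
next
  case False
  have "\<sigma> a * \<sigma> (inverse a) = 1" using mult[of "inverse a" a] False by simp
  then show ?thesis using False by (metis inverse_unique)
qed
lemma surj: "\<exists>b. \<sigma> b = a"
  using bij by (metis bij_pointE)
end

locale admpair = antiaut \<sigma> for \<sigma> :: "'k::division_ring \<Rightarrow> 'k" +
  fixes \<epsilon> :: 'k
  assumes adm: "admissible \<sigma> \<epsilon>"
begin
lemma se: "\<sigma> \<epsilon> * \<epsilon> = 1" using adm by (simp add: admissible_def)
lemma ss: "\<sigma> (\<sigma> t) = \<epsilon> * t * inverse \<epsilon>" using adm by (simp add: admissible_def)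
lemma e0: "\<epsilon> \<noteq> 0"
proof
  assume "\<epsilon> = 0" then show False using se by simp
qed

lemma Ksig_0: "0 \<in> Ksig \<sigma> \<epsilon>"
  unfolding Ksig_def by (rule CollectI, rule exI[of _ 0], simp)
lemma Ksig_add: "s \<in> Ksig \<sigma> \<epsilon> \<Longrightarrow> t \<in> Ksig \<sigma> \<epsilon> \<Longrightarrow> s + t \<in> Ksig \<sigma> \<epsilon>"
proof -
  assume "s \<in> Ksig \<sigma> \<epsilon>" "t \<in> Ksig \<sigma> \<epsilon>"
  then obtain a b where e: "s = a - \<sigma> a * \<epsilon>" "t = b - \<sigma> b * \<epsilon>" unfolding Ksig_def by auto
  have "s + t = (a - \<sigma> a * \<epsilon>) + (b - \<sigma> b * \<epsilon>)" using e by simp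
  also have "\<dots> = (a + b) - \<sigma> (a + b) * \<epsilon>" by (simp add: algebra_simps)
  finally have "s + t = (a + b) - \<sigma> (a + b) * \<epsilon>" .
  then show ?thesis unfolding Ksig_def by blast
qed
lemma Ksig_minus: "s \<in> Ksig \<sigma> \<epsilon> \<Longrightarrow> - s \<in> Ksig \<sigma> \<epsilon>"
proof -
  assume "s \<in> Ksig \<sigma> \<epsilon>"
  then obtain a where "s = a - \<sigma> a * \<epsilon>" unfolding Ksig_def by auto
  then have "- s = (- a) - \<sigma> (- a) * \<epsilon>" by (simp add: algebra_simps)
  then show ?thesis unfolding Ksig_def by blast
qed
lemma Ksig_diff: "s \<in> Ksig \<sigma> \<epsilon> \<Longrightarrow> t \<in> Ksig \<sigma> \<epsilon> \<Longrightarrow> s - t \<in> Ksig \<sigma> \<epsilon>"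
proof -
  assume a: "s \<in> Ksig \<sigma> \<epsilon>" "t \<in> Ksig \<sigma> \<epsilon>"
  have "s + (- t) \<in> Ksig \<sigma> \<epsilon>" by (rule Ksig_add[OF a(1) Ksig_minus[OF a(2)]])
  then show ?thesis by (simp only: diff_conv_add_uminus)
qed
lemma Ksig_elem: "t - \<sigma> t * \<epsilon> \<in> Ksig \<sigma> \<epsilon>"
  unfolding Ksig_def by auto
lemma Ksig_circ: "s \<in> Ksig \<sigma> \<epsilon> \<Longrightarrow> \<sigma> l * s * l \<in> Ksig \<sigma> \<epsilon>"
proof -
  assume "s \<in> Ksig \<sigma> \<epsilon>"
  then obtain t where s: "s = t - \<sigma> t * \<epsilon>" unfolding Ksig_def by auto
  have "\<sigma> l * s * l = (\<sigma> l * t * l) - \<sigma> (\<sigma> l * t * l) * \<epsilon>"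
    using e0 by (simp add: s ss algebra_simps)
  then show ?thesis using Ksig_elem by metis
qed

lemma kbar_mem: "u \<in> kbar \<sigma> \<epsilon> t \<longleftrightarrow> u - t \<in> Ksig \<sigma> \<epsilon>"
  unfolding kbar_def by (simp add: set_minus_plus)
lemma kbar_eq: "kbar \<sigma> \<epsilon> s = kbar \<sigma> \<epsilon> t \<longleftrightarrow> s - t \<in> Ksig \<sigma> \<epsilon>"
proof
  assume "kbar \<sigma> \<epsilon> s = kbar \<sigma> \<epsilon> t"
  moreover have "s \<in> kbar \<sigma> \<epsilon> s" using kbar_mem Ksig_0 by simp
  ultimately show "s - t \<in> Ksig \<sigma> \<epsilon>" using kbar_mem by blast
next
  assume a: "s - t \<in> Ksig \<sigma> \<epsilon>"
  show "kbar \<sigma> \<epsilon> s = kbar \<sigma> \<epsilon> t"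
  proof (auto simp: kbar_mem)
    fix u assume "u - s \<in> Ksig \<sigma> \<epsilon>"
    from Ksig_add[OF this a] show "u - t \<in> Ksig \<sigma> \<epsilon>" by simp
  next
    fix u assume "u - t \<in> Ksig \<sigma> \<epsilon>"
    from Ksig_diff[OF this a] show "u - s \<in> Ksig \<sigma> \<epsilon>" by simp
  qed
qed
lemma kbar_add: "kbar \<sigma> \<epsilon> s + kbar \<sigma> \<epsilon> t = kbar \<sigma> \<epsilon> (s + t)"
proof (auto simp: kbar_mem elim!: set_plus_elim)
  fix a b assume "a - s \<in> Ksig \<sigma> \<epsilon>" "b - t \<in> Ksig \<sigma> \<epsilon>"
  from Ksig_add[OF this] show "a + b - (s + t) \<in> Ksig \<sigma> \<epsilon>" by (simp add: algebra_simps)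
next
  fix u assume a: "u - (s + t) \<in> Ksig \<sigma> \<epsilon>"
  have m1: "u - t \<in> kbar \<sigma> \<epsilon> s" using a by (simp add: kbar_mem algebra_simps)
  have m2: "t \<in> kbar \<sigma> \<epsilon> t" using Ksig_0 by (simp add: kbar_mem)
  have "(u - t) + t \<in> kbar \<sigma> \<epsilon> s + kbar \<sigma> \<epsilon> t" by (rule set_plus_intro[OF m1 m2])
  then show "u \<in> kbar \<sigma> \<epsilon> s + kbar \<sigma> \<epsilon> t" by simp
qed
lemma circ_kbar: "circ \<sigma> \<epsilon> (kbar \<sigma> \<epsilon> t) l = kbar \<sigma> \<epsilon> (\<sigma> l * t * l)"
proof (auto simp: circ_def kbar_mem elim!: set_plus_elim)
  fix u k assume u: "u - t \<in> Ksig \<sigma> \<epsilon>" and k: "k \<in> Ksig \<sigma> \<epsilon>"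
  have eq: "\<sigma> l * u * l + k - \<sigma> l * t * l = \<sigma> l * (u - t) * l + k" by (simp add: algebra_simps)
  show "\<sigma> l * u * l + k - \<sigma> l * t * l \<in> Ksig \<sigma> \<epsilon>" unfolding eq by (rule Ksig_add[OF Ksig_circ[OF u] k])
next
  fix u assume a: "u - \<sigma> l * t * l \<in> Ksig \<sigma> \<epsilon>"
  have m: "\<sigma> l * t * l \<in> (\<lambda>s. \<sigma> l * s * l) ` kbar \<sigma> \<epsilon> t" using Ksig_0 by (auto simp: kbar_mem)
  have "\<sigma> l * t * l + (u - \<sigma> l * t * l) \<in> (\<lambda>s. \<sigma> l * s * l) ` kbar \<sigma> \<epsilon> t + Ksig \<sigma> \<epsilon>"
    by (rule set_plus_intro[OF m a])
  then show "u \<in> (\<lambda>s. \<sigma> l * s * l) ` kbar \<sigma> \<epsilon> t + Ksig \<sigma> \<epsilon>" by simp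
qed
end


section \<open>Vector spaces\<close>

locale vs =
  fixes sm :: "'v::ab_group_add \<Rightarrow> 'k::division_ring \<Rightarrow> 'v"
  assumes V: "right_vector_space sm"
begin
lemma sm_one[simp]: "sm x 1 = x" using V unfolding right_vector_space_def by blast
lemma sm_mult: "sm x (a * b) = sm (sm x a) b" using V unfolding right_vector_space_def by blast
lemma sm_addv: "sm (x + y) a = sm x a + sm y a" using V unfolding right_vector_space_def by blast
lemma sm_adds: "sm x (a + b) = sm x a + sm x b" using V unfolding right_vector_space_def by blast
lemma sm_zs[simp]: "sm x 0 = 0"
  using sm_adds[of x 0 0] by simp
lemma sm_zv[simp]: "sm 0 a = 0"
  using sm_addv[of 0 0 a] by simp
lemma sm_minuss: "sm x (- a) = - sm x a"
proof -
  have "sm x a + sm x (- a) = 0" using sm_adds[of x a "-a"] by simp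
  then show ?thesis by (rule minus_unique[symmetric])
qed
lemma sm_minusv: "sm (- x) a = - sm x a"
proof -
  have "sm x a + sm (- x) a = 0" using sm_addv[of x "-x" a] by simp
  then show ?thesis by (rule minus_unique[symmetric])
qed
lemma sm_diffs: "sm x (a - b) = sm x a - sm x b"
  using sm_adds[of x a "-b"] by (simp add: sm_minuss)
lemma sm_diffv: "sm (x - y) a = sm x a - sm y a"
  using sm_addv[of x "-y" a] by (simp add: sm_minusv)
lemma pt_self: "x \<in> pt sm x"
  unfolding pt_def by (metis rangeI sm_one)
lemma pt_scale: "l \<noteq> 0 \<Longrightarrow> pt sm (sm x l) = pt sm x"
  unfolding pt_def
proof
  show "range (sm (sm x l)) \<subseteq> range (sm x)" by (auto simp: sm_mult[symmetric])
next
  assume l: "l \<noteq> 0"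
  show "range (sm x) \<subseteq> range (sm (sm x l))"
  proof
    fix y assume "y \<in> range (sm x)"
    then obtain a where "y = sm x a" by auto
    then have "y = sm (sm x l) (inverse l * a)" using l by (simp add: sm_mult[symmetric] mult.assoc[symmetric])
    then show "y \<in> range (sm (sm x l))" by auto
  qed
qed
lemma pt_eq: "pt sm x = pt sm y \<Longrightarrow> \<exists>l. x = sm y l"
  using pt_self[of x] unfolding pt_def by auto
end

section \<open>Generalized quadratic forms\<close>

locale gqf = vs sm + admpair \<sigma> \<epsilon>
  for sm :: "'v::ab_group_add \<Rightarrow> 'k::division_ring \<Rightarrow> 'v" and \<sigma> \<epsilon> +
  fixes Rb :: "'k set set" and q :: "'v \<Rightarrow> 'k set set"
  assumes gq: "gen_quadratic_form sm \<sigma> \<epsilon> Rb q"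
begin

definition fq :: "'v \<Rightarrow> 'v \<Rightarrow> 'k" where
  "fq = (SOME f. trace_valued_sesquilinear sm \<sigma> \<epsilon> f \<and>
          (\<forall>x y. q (x + y) = q x + q y + (kbar \<sigma> \<epsilon> (f x y) +o Rb)))"

lemma fq_prop: "trace_valued_sesquilinear sm \<sigma> \<epsilon> fq \<and>
          (\<forall>x y. q (x + y) = q x + q y + (kbar \<sigma> \<epsilon> (fq x y) +o Rb))"
proof -
  have "\<exists>f. trace_valued_sesquilinear sm \<sigma> \<epsilon> f \<and>
          (\<forall>x y. q (x + y) = q x + q y + (kbar \<sigma> \<epsilon> (f x y) +o Rb))"
    using gq by (simp add: gen_quadratic_form_def)
  then show ?thesis unfolding fq_def by (rule someI_ex)
qed

lemma f_add1: "fq (x + x') y = fq x y + fq x' y"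
  using fq_prop unfolding trace_valued_sesquilinear_def by blast
lemma f_add2: "fq x (y + y') = fq x y + fq x y'"
  using fq_prop unfolding trace_valued_sesquilinear_def by blast
lemma f_sm: "fq (sm x a) (sm y b) = \<sigma> a * fq x y * b"
  using fq_prop unfolding trace_valued_sesquilinear_def by blast
lemma f_sym: "fq y x = \<sigma> (fq x y) * \<epsilon>"
  using fq_prop unfolding trace_valued_sesquilinear_def by blast
lemma q_add: "q (x + y) = q x + q y + (kbar \<sigma> \<epsilon> (fq x y) +o Rb)"
  using fq_prop by blast
lemma f_sml: "fq (sm x a) y = \<sigma> a * fq x y"
  using f_sm[of x a y 1] by simp
lemma f_smr: "fq x (sm y b) = fq x y * b"
  using f_sm[of x 1 y b] by simp
lemma f_z1[simp]: "fq 0 y = 0"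
  using f_add1[of 0 0 y] by simp
lemma f_z2[simp]: "fq x 0 = 0"
  using f_add2[of x 0 0] by simp
lemma f_minus1: "fq (- x) y = - fq x y"
proof -
  have "fq x y + fq (- x) y = 0" using f_add1[of x "-x" y] by simp
  then show ?thesis by (rule minus_unique[symmetric])
qed
lemma f_minus2: "fq x (- y) = - fq x y"
proof -
  have "fq x y + fq x (- y) = 0" using f_add2[of x y "-y"] by simp
  then show ?thesis by (rule minus_unique[symmetric])
qed
lemma f_diff1: "fq (x - x') y = fq x y - fq x' y"
  using f_add1[of x "-x'" y] by (simp add: f_minus1)
lemma f_diff2: "fq x (y - y') = fq x y - fq x y'"
  using f_add2[of x y "-y'"] by (simp add: f_minus2)

lemma cs: "closed_subgroup \<sigma> \<epsilon> Rb" using gq by (simp add: gen_quadratic_form_def)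

definition Rp :: "'k set" where "Rp = {t. kbar \<sigma> \<epsilon> t \<in> Rb}"

lemma Rp_0: "0 \<in> Rp" using cs by (simp add: closed_subgroup_def Rp_def)
lemma Rp_diff: "s \<in> Rp \<Longrightarrow> t \<in> Rp \<Longrightarrow> s - t \<in> Rp"
  using cs by (simp add: closed_subgroup_def Rp_def)
lemma Rp_minus: "t \<in> Rp \<Longrightarrow> - t \<in> Rp"
proof -
  assume "t \<in> Rp"
  then have "0 - t \<in> Rp" by (rule Rp_diff[OF Rp_0])
  then show ?thesis by simp
qed
lemma Rp_add: "s \<in> Rp \<Longrightarrow> t \<in> Rp \<Longrightarrow> s + t \<in> Rp"
proof -
  assume a: "s \<in> Rp" "t \<in> Rp"
  have "s - (- t) \<in> Rp" by (rule Rp_diff[OF a(1) Rp_minus[OF a(2)]])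
  then show ?thesis by simp
qed
lemma Ksig_Rp: "k \<in> Ksig \<sigma> \<epsilon> \<Longrightarrow> k \<in> Rp"
proof -
  assume "k \<in> Ksig \<sigma> \<epsilon>"
  then have "kbar \<sigma> \<epsilon> k = kbar \<sigma> \<epsilon> 0" by (simp add: kbar_eq)
  then show ?thesis using Rp_0 by (simp add: Rp_def)
qed
lemma Rp_circ: "t \<in> Rp \<Longrightarrow> \<sigma> l * t * l \<in> Rp"
proof -
  assume "t \<in> Rp"
  then have "kbar \<sigma> \<epsilon> t \<in> Rb" by (simp add: Rp_def)
  then have "circ \<sigma> \<epsilon> (kbar \<sigma> \<epsilon> t) l \<in> Rb" using cs unfolding closed_subgroup_def by blast
  then show ?thesis by (simp add: circ_kbar Rp_def)
qed
lemma Rb_eq: "Rb = kbar \<sigma> \<epsilon> ` Rp"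
proof
  show "Rb \<subseteq> kbar \<sigma> \<epsilon> ` Rp"
  proof
    fix X assume X: "X \<in> Rb"
    then have "X \<in> Kbar \<sigma> \<epsilon>" using cs by (auto simp: closed_subgroup_def)
    then obtain t where "X = kbar \<sigma> \<epsilon> t" by (auto simp: Kbar_def)
    then show "X \<in> kbar \<sigma> \<epsilon> ` Rp" using X by (auto simp: Rp_def)
  qed
qed (auto simp: Rp_def)

lemma coset_mem: "X \<in> kbar \<sigma> \<epsilon> s +o Rb \<longleftrightarrow> (\<exists>u. X = kbar \<sigma> \<epsilon> u \<and> u - s \<in> Rp)"
proof
  assume "X \<in> kbar \<sigma> \<epsilon> s +o Rb"
  then obtain Y where Y: "Y \<in> Rb" "X = kbar \<sigma> \<epsilon> s + Y" by (auto simp: elt_set_plus_def)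
  then obtain r where r: "r \<in> Rp" "Y = kbar \<sigma> \<epsilon> r" using Rb_eq by auto
  then have "X = kbar \<sigma> \<epsilon> (s + r)" using Y by (simp add: kbar_add)
  then show "\<exists>u. X = kbar \<sigma> \<epsilon> u \<and> u - s \<in> Rp" using r by (intro exI[of _ "s + r"]) simp
next
  assume "\<exists>u. X = kbar \<sigma> \<epsilon> u \<and> u - s \<in> Rp"
  then obtain u where u: "X = kbar \<sigma> \<epsilon> u" "u - s \<in> Rp" by auto
  have "X = kbar \<sigma> \<epsilon> s + kbar \<sigma> \<epsilon> (u - s)" using u by (simp add: kbar_add)
  moreover have "kbar \<sigma> \<epsilon> (u - s) \<in> Rb" using u by (simp add: Rp_def)
  ultimately show "X \<in> kbar \<sigma> \<epsilon> s +o Rb" by (auto simp: elt_set_plus_def)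
qed

lemma coset_self: "kbar \<sigma> \<epsilon> s \<in> kbar \<sigma> \<epsilon> s +o Rb"
  unfolding coset_mem using Rp_0 by (intro exI[of _ s]) simp

lemma coset_eq: "kbar \<sigma> \<epsilon> s +o Rb = kbar \<sigma> \<epsilon> t +o Rb \<longleftrightarrow> s - t \<in> Rp"
proof
  assume e: "kbar \<sigma> \<epsilon> s +o Rb = kbar \<sigma> \<epsilon> t +o Rb"
  have "kbar \<sigma> \<epsilon> s \<in> kbar \<sigma> \<epsilon> s +o Rb" by (rule coset_self)
  then obtain u where u: "kbar \<sigma> \<epsilon> s = kbar \<sigma> \<epsilon> u" "u - t \<in> Rp" using e by (auto simp: coset_mem)
  then have "s - u \<in> Rp" by (simp add: kbar_eq Ksig_Rp)
  from Rp_add[OF this u(2)] show "s - t \<in> Rp" by simp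
next
  assume st: "s - t \<in> Rp"
  show "kbar \<sigma> \<epsilon> s +o Rb = kbar \<sigma> \<epsilon> t +o Rb"
  proof (rule set_eqI)
    fix X
    show "X \<in> kbar \<sigma> \<epsilon> s +o Rb \<longleftrightarrow> X \<in> kbar \<sigma> \<epsilon> t +o Rb"
    proof
      assume "X \<in> kbar \<sigma> \<epsilon> s +o Rb"
      then obtain u where u: "X = kbar \<sigma> \<epsilon> u" "u - s \<in> Rp" by (auto simp: coset_mem)
      have "u - t \<in> Rp" using Rp_add[OF u(2) st] by simp
      then show "X \<in> kbar \<sigma> \<epsilon> t +o Rb" using u by (auto simp: coset_mem)
    next
      assume "X \<in> kbar \<sigma> \<epsilon> t +o Rb"
      then obtain u where u: "X = kbar \<sigma> \<epsilon> u" "u - t \<in> Rp" by (auto simp: coset_mem)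
      have "u - s \<in> Rp" using Rp_diff[OF u(2) st] by simp
      then show "X \<in> kbar \<sigma> \<epsilon> s +o Rb" using u by (auto simp: coset_mem)
    qed
  qed
qed

lemma coset_zero: "kbar \<sigma> \<epsilon> 0 +o Rb = Rb"
proof (rule set_eqI)
  fix X
  have "X \<in> kbar \<sigma> \<epsilon> 0 +o Rb \<longleftrightarrow> (\<exists>u. X = kbar \<sigma> \<epsilon> u \<and> u \<in> Rp)"
    by (simp only: coset_mem diff_zero)
  also have "\<dots> \<longleftrightarrow> X \<in> kbar \<sigma> \<epsilon> ` Rp" by blast
  also have "\<dots> \<longleftrightarrow> X \<in> Rb" by (subst (2) Rb_eq) (rule refl)
  finally show "X \<in> kbar \<sigma> \<epsilon> 0 +o Rb \<longleftrightarrow> X \<in> Rb" .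
qed

lemma coset_add: "(kbar \<sigma> \<epsilon> s +o Rb) + (kbar \<sigma> \<epsilon> t +o Rb) = kbar \<sigma> \<epsilon> (s + t) +o Rb"
proof (rule set_eqI)
  fix X
  show "X \<in> (kbar \<sigma> \<epsilon> s +o Rb) + (kbar \<sigma> \<epsilon> t +o Rb) \<longleftrightarrow> X \<in> kbar \<sigma> \<epsilon> (s + t) +o Rb"
  proof
    assume "X \<in> (kbar \<sigma> \<epsilon> s +o Rb) + (kbar \<sigma> \<epsilon> t +o Rb)"
    then obtain A B where AB: "A \<in> kbar \<sigma> \<epsilon> s +o Rb" "B \<in> kbar \<sigma> \<epsilon> t +o Rb" "X = A + B"
      by (auto elim!: set_plus_elim)
    obtain u where u: "A = kbar \<sigma> \<epsilon> u" "u - s \<in> Rp" using AB(1) by (auto simp: coset_mem)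
    obtain v where v: "B = kbar \<sigma> \<epsilon> v" "v - t \<in> Rp" using AB(2) by (auto simp: coset_mem)
    have "X = kbar \<sigma> \<epsilon> (u + v)" using AB u v by (simp add: kbar_add)
    moreover have "(u + v) - (s + t) \<in> Rp" using Rp_add[OF u(2) v(2)] by (simp add: algebra_simps)
    ultimately show "X \<in> kbar \<sigma> \<epsilon> (s + t) +o Rb" by (auto simp: coset_mem)
  next
    assume "X \<in> kbar \<sigma> \<epsilon> (s + t) +o Rb"
    then obtain u where u: "X = kbar \<sigma> \<epsilon> u" "u - (s + t) \<in> Rp" by (auto simp: coset_mem)
    have A: "kbar \<sigma> \<epsilon> (u - t) \<in> kbar \<sigma> \<epsilon> s +o Rb" using u(2) by (auto simp: coset_mem algebra_simps)
    have B: "kbar \<sigma> \<epsilon> t \<in> kbar \<sigma> \<epsilon> t +o Rb" by (rule coset_self)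
    have "X = kbar \<sigma> \<epsilon> (u - t) + kbar \<sigma> \<epsilon> t" using u by (simp add: kbar_add)
    then show "X \<in> (kbar \<sigma> \<epsilon> s +o Rb) + (kbar \<sigma> \<epsilon> t +o Rb)" using set_plus_intro[OF A B] by simp
  qed
qed

lemma circq_coset: "circq \<sigma> \<epsilon> Rb (kbar \<sigma> \<epsilon> t +o Rb) l = kbar \<sigma> \<epsilon> (\<sigma> l * t * l) +o Rb"
proof (rule set_eqI)
  fix X
  show "X \<in> circq \<sigma> \<epsilon> Rb (kbar \<sigma> \<epsilon> t +o Rb) l \<longleftrightarrow> X \<in> kbar \<sigma> \<epsilon> (\<sigma> l * t * l) +o Rb"
  proof
    assume "X \<in> circq \<sigma> \<epsilon> Rb (kbar \<sigma> \<epsilon> t +o Rb) l"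
    then obtain A B where AB: "A \<in> kbar \<sigma> \<epsilon> t +o Rb" "B \<in> Rb" "X = circ \<sigma> \<epsilon> A l + B"
      unfolding circq_def by (auto elim!: set_plus_elim)
    obtain u where u: "A = kbar \<sigma> \<epsilon> u" "u - t \<in> Rp" using AB(1) by (auto simp: coset_mem)
    obtain r where r: "r \<in> Rp" "B = kbar \<sigma> \<epsilon> r" using AB(2) Rb_eq by auto
    have X: "X = kbar \<sigma> \<epsilon> (\<sigma> l * u * l + r)" using AB u r by (simp add: circ_kbar kbar_add)
    have e: "\<sigma> l * u * l + r - \<sigma> l * t * l = \<sigma> l * (u - t) * l + r" by (simp add: algebra_simps)
    have "\<sigma> l * (u - t) * l + r \<in> Rp" using Rp_add[OF Rp_circ[OF u(2)] r(1)] .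
    then have "\<sigma> l * u * l + r - \<sigma> l * t * l \<in> Rp" unfolding e .
    then show "X \<in> kbar \<sigma> \<epsilon> (\<sigma> l * t * l) +o Rb" unfolding coset_mem X by blast
  next
    assume "X \<in> kbar \<sigma> \<epsilon> (\<sigma> l * t * l) +o Rb"
    then obtain u where u: "X = kbar \<sigma> \<epsilon> u" "u - \<sigma> l * t * l \<in> Rp" by (auto simp: coset_mem)
    have A: "circ \<sigma> \<epsilon> (kbar \<sigma> \<epsilon> t) l \<in> (\<lambda>X. circ \<sigma> \<epsilon> X l) ` (kbar \<sigma> \<epsilon> t +o Rb)"
      using coset_self by blast
    have B: "kbar \<sigma> \<epsilon> (u - \<sigma> l * t * l) \<in> Rb" using u(2) by (simp add: Rp_def)
    have "X = circ \<sigma> \<epsilon> (kbar \<sigma> \<epsilon> t) l + kbar \<sigma> \<epsilon> (u - \<sigma> l * t * l)"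
      using u by (simp add: circ_kbar kbar_add)
    then show "X \<in> circq \<sigma> \<epsilon> Rb (kbar \<sigma> \<epsilon> t +o Rb) l"
      unfolding circq_def using set_plus_intro[OF A B] by simp
  qed
qed

definition Q :: "'v \<Rightarrow> 'k" where "Q x = (SOME t. q x = kbar \<sigma> \<epsilon> t +o Rb)"

lemma q_Q: "q x = kbar \<sigma> \<epsilon> (Q x) +o Rb"
proof -
  have "q x \<in> Kquot \<sigma> \<epsilon> Rb" using gq by (simp add: gen_quadratic_form_def)
  then have "\<exists>t. q x = kbar \<sigma> \<epsilon> t +o Rb" by (auto simp: Kquot_def Kbar_def)
  then show ?thesis unfolding Q_def by (rule someI_ex)
qed

lemma Q_scale: "Q (sm x l) - \<sigma> l * Q x * l \<in> Rp"
proof -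
  have "q (sm x l) = circq \<sigma> \<epsilon> Rb (q x) l" using gq by (simp add: gen_quadratic_form_def)
  then have "kbar \<sigma> \<epsilon> (Q (sm x l)) +o Rb = kbar \<sigma> \<epsilon> (\<sigma> l * Q x * l) +o Rb"
    by (simp add: q_Q circq_coset)
  then show ?thesis by (simp add: coset_eq)
qed

lemma Q_add: "Q (x + y) - (Q x + Q y + fq x y) \<in> Rp"
proof -
  have "kbar \<sigma> \<epsilon> (Q (x + y)) +o Rb = kbar \<sigma> \<epsilon> (Q x + Q y + fq x y) +o Rb"
    using q_add[of x y] by (simp add: q_Q coset_add)
  then show ?thesis by (simp add: coset_eq)
qed

lemma sing: "q x = Rb \<longleftrightarrow> Q x \<in> Rp"
  using coset_eq[of "Q x" 0] by (simp add: q_Q coset_zero)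

lemma nontriv: "nontrivial_qform q Rb \<Longrightarrow> \<exists>s. s \<notin> Rp"
  unfolding nontrivial_qform_def using sing by blast

end


context gqf
begin

lemma Rp_shift: "A - t \<in> Rp \<Longrightarrow> (A \<in> Rp \<longleftrightarrow> t \<in> Rp)"
proof
  assume a: "A - t \<in> Rp" "A \<in> Rp"
  have "A - (A - t) \<in> Rp" by (rule Rp_diff[OF a(2) a(1)])
  then show "t \<in> Rp" by simp
next
  assume a: "A - t \<in> Rp" "t \<in> Rp"
  have "(A - t) + t \<in> Rp" by (rule Rp_add[OF a(1) a(2)])
  then show "A \<in> Rp" by simp
qed

lemma Rp_cong: "A - B \<in> Rp \<Longrightarrow> B - C \<in> Rp \<Longrightarrow> A - C \<in> Rp"
proof -
  assume a: "A - B \<in> Rp" "B - C \<in> Rp"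
  have "(A - B) + (B - C) \<in> Rp" by (rule Rp_add[OF a])
  then show ?thesis by simp
qed

lemma Q_zero: "Q 0 \<in> Rp"
  using Q_scale[of 0 0] by simp

lemma Z_scale: "Q x \<in> Rp \<Longrightarrow> Q (sm x l) \<in> Rp"
  using Rp_shift[OF Q_scale[of x l]] Rp_circ by blast

lemma Q_comb: "Q (sm y a + sm w b) - (\<sigma> a * Q y * a + \<sigma> b * Q w * b + \<sigma> a * fq y w * b) \<in> Rp"
proof -
  have e1: "Q (sm y a + sm w b) - (Q (sm y a) + Q (sm w b) + fq (sm y a) (sm w b)) \<in> Rp"
    by (rule Q_add)
  have e2: "Q (sm y a) - \<sigma> a * Q y * a \<in> Rp" by (rule Q_scale)
  have e3: "Q (sm w b) - \<sigma> b * Q w * b \<in> Rp" by (rule Q_scale)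
  have "(Q (sm y a + sm w b) - (Q (sm y a) + Q (sm w b) + fq (sm y a) (sm w b)))
        + (Q (sm y a) - \<sigma> a * Q y * a) + (Q (sm w b) - \<sigma> b * Q w * b) \<in> Rp"
    by (rule Rp_add[OF Rp_add[OF e1 e2] e3])
  moreover have "(Q (sm y a + sm w b) - (Q (sm y a) + Q (sm w b) + fq (sm y a) (sm w b)))
        + (Q (sm y a) - \<sigma> a * Q y * a) + (Q (sm w b) - \<sigma> b * Q w * b)
        = Q (sm y a + sm w b) - (\<sigma> a * Q y * a + \<sigma> b * Q w * b + \<sigma> a * fq y w * b)"
    by (simp add: f_sm algebra_simps)
  ultimately show ?thesis by (simp only:)
qed

lemma Q_comb_Z: "Q y \<in> Rp \<Longrightarrow> Q w \<in> Rp \<Longrightarrow> Q (sm y a + sm w b) - \<sigma> a * fq y w * b \<in> Rp"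
proof -
  assume y: "Q y \<in> Rp" and w: "Q w \<in> Rp"
  have A: "\<sigma> a * Q y * a \<in> Rp" by (rule Rp_circ[OF y])
  have B: "\<sigma> b * Q w * b \<in> Rp" by (rule Rp_circ[OF w])
  have "(Q (sm y a + sm w b) - (\<sigma> a * Q y * a + \<sigma> b * Q w * b + \<sigma> a * fq y w * b))
     + (\<sigma> a * Q y * a + \<sigma> b * Q w * b) \<in> Rp"
    by (rule Rp_add[OF Q_comb Rp_add[OF A B]])
  then show ?thesis by (simp add: algebra_simps)
qed

lemma Zlem_zero: "Q y \<in> Rp \<Longrightarrow> Q w \<in> Rp \<Longrightarrow> fq y w = 0 \<Longrightarrow> Q (sm y a + sm w b) \<in> Rp"
  using Q_comb_Z[of y w a b] by simp

lemma fzero_char: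
  assumes y: "Q y \<in> Rp" and w: "Q w \<in> Rp" and nt: "s \<notin> Rp"
  shows "fq y w = 0 \<longleftrightarrow> (\<forall>a b. Q (sm y a + sm w b) \<in> Rp)"
proof
  assume "fq y w = 0" then show "\<forall>a b. Q (sm y a + sm w b) \<in> Rp" using Zlem_zero[OF y w] by blast
next
  assume all: "\<forall>a b. Q (sm y a + sm w b) \<in> Rp"
  show "fq y w = 0"
  proof (rule ccontr)
    assume ne: "fq y w \<noteq> 0"
    have "Q (sm y 1 + sm w (inverse (fq y w) * s)) - \<sigma> 1 * fq y w * (inverse (fq y w) * s) \<in> Rp"
      by (rule Q_comb_Z[OF y w])
    moreover have "\<sigma> 1 * fq y w * (inverse (fq y w) * s) = s" using ne by (simp add: mult.assoc[symmetric])
    ultimately have "Q (sm y 1 + sm w (inverse (fq y w) * s)) - s \<in> Rp" by simp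
    then have "s \<in> Rp" using all Rp_shift by blast
    then show False using nt by simp
  qed
qed

lemma f_self: "Q y \<in> Rp \<Longrightarrow> s \<notin> Rp \<Longrightarrow> fq y y = 0"
proof -
  assume y: "Q y \<in> Rp" and nt: "s \<notin> Rp"
  have "\<forall>a b. Q (sm y a + sm y b) \<in> Rp"
  proof (intro allI)
    fix a b
    have "sm y a + sm y b = sm y (a + b)" by (simp add: sm_adds)
    then show "Q (sm y a + sm y b) \<in> Rp" using Z_scale[OF y] by simp
  qed
  then show ?thesis using fzero_char[OF y y nt] by blast
qed

lemma Q_plus_comb:
  assumes w1: "Q w1 \<in> Rp" and w2: "Q w2 \<in> Rp"
  shows "Q (x + (sm w1 s + sm w2 t)) - (Q x + \<sigma> s * fq w1 w2 * t + fq x w1 * s + fq x w2 * t) \<in> Rp"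
proof -
  have e1: "Q (x + (sm w1 s + sm w2 t)) - (Q x + Q (sm w1 s + sm w2 t) + fq x (sm w1 s + sm w2 t)) \<in> Rp"
    by (rule Q_add)
  have e2: "Q (sm w1 s + sm w2 t) - \<sigma> s * fq w1 w2 * t \<in> Rp" by (rule Q_comb_Z[OF w1 w2])
  have "(Q (x + (sm w1 s + sm w2 t)) - (Q x + Q (sm w1 s + sm w2 t) + fq x (sm w1 s + sm w2 t)))
     + (Q (sm w1 s + sm w2 t) - \<sigma> s * fq w1 w2 * t) \<in> Rp" by (rule Rp_add[OF e1 e2])
  moreover have "fq x (sm w1 s + sm w2 t) = fq x w1 * s + fq x w2 * t" by (simp add: f_add2 f_smr)
  ultimately show ?thesis by (simp add: algebra_simps)
qed

end


lemma inv_c1: "(g::'k::division_ring) \<noteq> 0 \<Longrightarrow> inverse g * (g * x) = x"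
  by (simp add: mult.assoc[symmetric])
lemma inv_c2: "(g::'k::division_ring) \<noteq> 0 \<Longrightarrow> g * (inverse g * x) = x"
  by (simp add: mult.assoc[symmetric])

locale two = F1: gqf sm \<sigma>1 \<epsilon>1 R1 q1 + F2: gqf sm \<sigma>2 \<epsilon>2 R2 q2
  for sm :: "'v::ab_group_add \<Rightarrow> 'k::division_ring \<Rightarrow> 'v" and \<sigma>1 \<epsilon>1 R1 q1 \<sigma>2 \<epsilon>2 R2 q2 +
  fixes s1 s2 :: 'k
  assumes Zeq: "\<And>x. F1.Q x \<in> F1.Rp \<longleftrightarrow> F2.Q x \<in> F2.Rp"
    and nt1: "s1 \<notin> F1.Rp" and nt2: "s2 \<notin> F2.Rp"
begin

lemma fz: assumes y: "F1.Q y \<in> F1.Rp" and w: "F1.Q w \<in> F1.Rp"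
  shows "F1.fq y w = 0 \<longleftrightarrow> F2.fq y w = 0"
proof -
  have y2: "F2.Q y \<in> F2.Rp" and w2: "F2.Q w \<in> F2.Rp" using y w Zeq by blast+
  show ?thesis using F1.fzero_char[OF y w nt1] F2.fzero_char[OF y2 w2 nt2] Zeq by blast
qed

lemma core:
  assumes Za: "F1.Q a \<in> F1.Rp" and Zb: "F1.Q b \<in> F1.Rp"
    and Zc: "F1.Q c \<in> F1.Rp" and Zd: "F1.Q d \<in> F1.Rp"
    and fab: "F1.fq a b = 0" and fcd: "F1.fq c d = 0" and fad: "F1.fq a d = 0" and fbc: "F1.fq b c = 0"
    and fac: "F1.fq a c = 1" and fbd: "F1.fq b d = 1"
  shows "\<exists>\<kappa>. \<kappa> \<noteq> 0 \<and> (\<forall>t. \<sigma>2 t = \<kappa> * \<sigma>1 t * inverse \<kappa>) \<and> \<epsilon>2 = \<kappa> * \<sigma>1 (inverse \<kappa>) * \<epsilon>1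
     \<and> (\<forall>t. t \<in> F1.Rp \<longleftrightarrow> \<kappa> * t \<in> F2.Rp) \<and> (\<forall>x. F2.Q x - \<kappa> * F1.Q x \<in> F2.Rp)"
proof -
  have Za2: "F2.Q a \<in> F2.Rp" and Zb2: "F2.Q b \<in> F2.Rp" and Zc2: "F2.Q c \<in> F2.Rp" and Zd2: "F2.Q d \<in> F2.Rp"
    using Za Zb Zc Zd Zeq by blast+
  have fba: "F1.fq b a = 0" using F1.f_sym[where x=a and y=b] fab by simp
  have fdc: "F1.fq d c = 0" using F1.f_sym[where x=c and y=d] fcd by simp
  have fda: "F1.fq d a = 0" using F1.f_sym[where x=a and y=d] fad by simp
  have fcb: "F1.fq c b = 0" using F1.f_sym[where x=b and y=c] fbc by simp
  have fca: "F1.fq c a = \<epsilon>1" using F1.f_sym[where x=a and y=c] fac by simp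
  have fdb: "F1.fq d b = \<epsilon>1" using F1.f_sym[where x=b and y=d] fbd by simp
  have faa: "F1.fq a a = 0" by (rule F1.f_self[OF Za nt1])
  have fcc: "F1.fq c c = 0" by (rule F1.f_self[OF Zc nt1])
  have gab: "F2.fq a b = 0" using fz[OF Za Zb] fab by simp
  have gcd: "F2.fq c d = 0" using fz[OF Zc Zd] fcd by simp
  have gad: "F2.fq a d = 0" using fz[OF Za Zd] fad by simp
  have gbc: "F2.fq b c = 0" using fz[OF Zb Zc] fbc by simp
  have gba: "F2.fq b a = 0" using fz[OF Zb Za] fba by simp
  have gdc: "F2.fq d c = 0" using fz[OF Zd Zc] fdc by simp
  have gda: "F2.fq d a = 0" using fz[OF Zd Za] fda by simp
  have gcb: "F2.fq c b = 0" using fz[OF Zc Zb] fcb by simp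
  have gaa: "F2.fq a a = 0" by (rule F2.f_self[OF Za2 nt2])
  have gcc: "F2.fq c c = 0" by (rule F2.f_self[OF Zc2 nt2])
  define g where "g = F2.fq a c"
  have g0: "g \<noteq> 0" using fz[OF Za Zc] fac unfolding g_def by simp
  have uv: "F2.fq a c + \<sigma>2 l * F2.fq b d * m = 0" if h0: "1 + \<sigma>1 l * m = 0" for l m
  proof -
    have Zu: "F1.Q (sm a 1 + sm b l) \<in> F1.Rp" by (rule F1.Zlem_zero[OF Za Zb fab])
    have Zv: "F1.Q (sm c 1 + sm d m) \<in> F1.Rp" by (rule F1.Zlem_zero[OF Zc Zd fcd])
    have "F1.fq (sm a 1 + sm b l) (sm c 1 + sm d m) = 1 + \<sigma>1 l * m"
      by (simp add: F1.f_add1 F1.f_add2 F1.f_sml F1.f_smr fac fad fbc fbd)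
    then have "F1.fq (sm a 1 + sm b l) (sm c 1 + sm d m) = 0" using h0 by simp
    then have "F2.fq (sm a 1 + sm b l) (sm c 1 + sm d m) = 0" using fz[OF Zu Zv] by simp
    moreover have "F2.fq (sm a 1 + sm b l) (sm c 1 + sm d m) = F2.fq a c + \<sigma>2 l * F2.fq b d * m"
      by (simp add: F2.f_add1 F2.f_add2 F2.f_sml F2.f_smr gad gbc mult.assoc)
    ultimately show ?thesis by simp
  qed
  have hg: "F2.fq b d = g"
  proof -
    have "F2.fq a c + \<sigma>2 1 * F2.fq b d * (-1) = 0" by (rule uv) simp
    then show ?thesis unfolding g_def by simp
  qed
  have sig: "\<sigma>2 l = g * \<sigma>1 l * inverse g" for l
  proof (cases "l = 0")
    case True then show ?thesis by simp
  next
    case False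
    define s where "s = \<sigma>1 l"
    have s0: "s \<noteq> 0" using False unfolding s_def by simp
    have "g + \<sigma>2 l * g * (- inverse s) = 0"
      using uv[of l "- inverse s"] s0 hg unfolding s_def g_def by simp
    then have e1: "\<sigma>2 l * g * inverse s = g" by (simp add: algebra_simps)
    have "\<sigma>2 l * g = \<sigma>2 l * g * inverse s * s" using s0 by (simp add: mult.assoc)
    also have "\<dots> = g * s" using e1 by simp
    finally have e2: "\<sigma>2 l * g = g * s" .
    have "\<sigma>2 l = \<sigma>2 l * g * inverse g" using g0 by (simp add: mult.assoc)
    also have "\<dots> = g * s * inverse g" using e2 by simp
    finally show ?thesis unfolding s_def .
  qed
  have Rrel: "t \<in> F1.Rp \<longleftrightarrow> g * t \<in> F2.Rp" for t
  proof -
    obtain al where al: "\<sigma>1 al = t" using F1.surj by blast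
    have m1: "F1.Q (sm a al + sm c 1) - \<sigma>1 al * F1.fq a c * 1 \<in> F1.Rp" by (rule F1.Q_comb_Z[OF Za Zc])
    have m2: "F2.Q (sm a al + sm c 1) - \<sigma>2 al * F2.fq a c * 1 \<in> F2.Rp" by (rule F2.Q_comb_Z[OF Za2 Zc2])
    have e: "\<sigma>2 al * F2.fq a c * 1 = g * t" using g0 unfolding sig[of al] al g_def by (simp add: mult.assoc)
    have "t \<in> F1.Rp \<longleftrightarrow> F1.Q (sm a al + sm c 1) \<in> F1.Rp" using F1.Rp_shift[OF m1] fac al by simp
    also have "\<dots> \<longleftrightarrow> F2.Q (sm a al + sm c 1) \<in> F2.Rp" by (rule Zeq)
    also have "\<dots> \<longleftrightarrow> g * t \<in> F2.Rp" using F2.Rp_shift[OF m2] e by simp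
    finally show ?thesis .
  qed
  define h' where "h' = F2.fq c a"
  have lin: "(inverse g * h' - \<epsilon>1) * al \<in> F1.Rp" for al
  proof -
    have m2: "F2.Q (sm a al + sm c 1) - \<sigma>2 al * F2.fq a c * 1 \<in> F2.Rp" by (rule F2.Q_comb_Z[OF Za2 Zc2])
    have m3: "F2.Q (sm c 1 + sm a al) - \<sigma>2 1 * F2.fq c a * al \<in> F2.Rp" by (rule F2.Q_comb_Z[OF Zc2 Za2])
    have "(F2.Q (sm a al + sm c 1) - h' * al) - (F2.Q (sm a al + sm c 1) - \<sigma>2 al * g) \<in> F2.Rp"
      by (rule F2.Rp_diff) (use m2 m3 in \<open>simp_all add: add.commute g_def h'_def\<close>)
    then have "\<sigma>2 al * g - h' * al \<in> F2.Rp" by simp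
    moreover have "\<sigma>2 al * g - h' * al = g * (\<sigma>1 al - inverse g * h' * al)"
      using g0 unfolding sig[of al] by (simp add: algebra_simps inv_c2)
    ultimately have t1: "\<sigma>1 al - inverse g * h' * al \<in> F1.Rp" using Rrel by simp
    have "\<sigma>1 al - \<sigma>1 (\<sigma>1 al) * \<epsilon>1 \<in> F1.Rp" by (rule F1.Ksig_Rp[OF F1.Ksig_elem])
    moreover have "\<sigma>1 (\<sigma>1 al) * \<epsilon>1 = \<epsilon>1 * al" using F1.e0 by (simp add: F1.ss mult.assoc)
    ultimately have t2: "\<sigma>1 al - \<epsilon>1 * al \<in> F1.Rp" by simp
    have "(\<sigma>1 al - \<epsilon>1 * al) - (\<sigma>1 al - inverse g * h' * al) \<in> F1.Rp" by (rule F1.Rp_diff[OF t2 t1])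
    then show ?thesis by (simp add: algebra_simps)
  qed
  have hh: "h' = g * \<epsilon>1"
  proof -
    have z: "inverse g * h' - \<epsilon>1 = 0"
    proof (rule ccontr)
      assume z: "inverse g * h' - \<epsilon>1 \<noteq> 0"
      have "(inverse g * h' - \<epsilon>1) * (inverse (inverse g * h' - \<epsilon>1) * s1) \<in> F1.Rp" by (rule lin)
      then have "s1 \<in> F1.Rp" using z by (simp add: mult.assoc[symmetric])
      then show False using nt1 by simp
    qed
    then have "inverse g * h' = \<epsilon>1" by simp
    then have "g * (inverse g * h') = g * \<epsilon>1" by simp
    then show ?thesis using g0 by (simp add: inv_c2)
  qed
  have eps: "\<epsilon>2 = g * \<sigma>1 (inverse g) * \<epsilon>1"
  proof -
    have s0: "\<sigma>1 g \<noteq> 0" using g0 by simp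
    have "g * \<epsilon>1 = F2.fq c a" using hh unfolding h'_def by simp
    also have "\<dots> = \<sigma>2 g * \<epsilon>2" using F2.f_sym[where x=a and y=c] unfolding g_def by simp
    also have "\<dots> = g * (\<sigma>1 g * (inverse g * \<epsilon>2))" unfolding sig[of g] by (simp add: mult.assoc)
    finally have e: "g * \<epsilon>1 = g * (\<sigma>1 g * (inverse g * \<epsilon>2))" .
    have "\<epsilon>1 = \<sigma>1 g * (inverse g * \<epsilon>2)" using inv_c1[OF g0, of \<epsilon>1] e inv_c1[OF g0] by metis
    then have "inverse (\<sigma>1 g) * \<epsilon>1 = inverse g * \<epsilon>2" using inv_c1[OF s0] by simp
    then have "g * (inverse (\<sigma>1 g) * \<epsilon>1) = \<epsilon>2" using inv_c2[OF g0] by simp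
    then show ?thesis by (simp add: mult.assoc)
  qed
  have kern: "F2.fq x a = 0 \<and> F2.fq x c = 0" if xa: "F1.fq x a = 0" and xc: "F1.fq x c = 0" for x
  proof -
    obtain s where s: "\<sigma>1 s = 1 - F1.fq x d" using F1.surj by blast
    define t where "t = - F1.Q x - F1.fq x b * s"
    define y where "y = x + (sm b s + sm d t)"
    have m: "F1.Q y - (F1.Q x + \<sigma>1 s * F1.fq b d * t + F1.fq x b * s + F1.fq x d * t) \<in> F1.Rp"
      unfolding y_def by (rule F1.Q_plus_comb[OF Zb Zd])
    have "F1.Q x + \<sigma>1 s * F1.fq b d * t + F1.fq x b * s + F1.fq x d * t = 0"
      unfolding s fbd t_def by (simp add: algebra_simps)
    then have Zy: "F1.Q y \<in> F1.Rp" using m by simp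
    have "F1.fq y a = 0" unfolding y_def by (simp add: F1.f_add1 F1.f_sml xa fba fda)
    then have ya: "F2.fq y a = 0" using fz[OF Zy Za] by simp
    have "F1.fq y c = 0" unfolding y_def by (simp add: F1.f_add1 F1.f_sml xc fbc fdc)
    then have yc: "F2.fq y c = 0" using fz[OF Zy Zc] by simp
    have "F2.fq y a = F2.fq x a" unfolding y_def by (simp add: F2.f_add1 F2.f_sml gba gda)
    moreover have "F2.fq y c = F2.fq x c" unfolding y_def by (simp add: F2.f_add1 F2.f_sml gbc gdc)
    ultimately show ?thesis using ya yc by simp
  qed
  have prp: "F2.fq x a = g * F1.fq x a \<and> F2.fq x c = g * F1.fq x c" for x
  proof -
    obtain s where s: "\<sigma>1 s = - (F1.fq x a * inverse \<epsilon>1)" using F1.surj by blast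
    obtain t where t: "\<sigma>1 t = - F1.fq x c" using F1.surj by blast
    define x0 where "x0 = x + (sm c s + sm a t)"
    have "F1.fq x0 a = F1.fq x a + \<sigma>1 s * \<epsilon>1" unfolding x0_def by (simp add: F1.f_add1 F1.f_sml fca faa)
    also have "\<dots> = 0" unfolding s using F1.e0 by (simp add: mult.assoc)
    finally have x0a: "F1.fq x0 a = 0" .
    have "F1.fq x0 c = F1.fq x c + \<sigma>1 t" unfolding x0_def by (simp add: F1.f_add1 F1.f_sml fcc fac)
    also have "\<dots> = 0" unfolding t by simp
    finally have x0c: "F1.fq x0 c = 0" .
    have k: "F2.fq x0 a = 0 \<and> F2.fq x0 c = 0" by (rule kern[OF x0a x0c])
    have "F2.fq x0 a = F2.fq x a + \<sigma>2 s * h'" unfolding x0_def h'_def by (simp add: F2.f_add1 F2.f_sml gaa)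
    also have "\<dots> = F2.fq x a + g * (\<sigma>1 s * (inverse g * (g * \<epsilon>1)))" unfolding sig[of s] hh by (simp add: mult.assoc)
    also have "\<dots> = F2.fq x a - g * F1.fq x a" unfolding s using g0 F1.e0 by (simp add: inv_c1 mult.assoc)
    finally have pa: "F2.fq x a = g * F1.fq x a" using k by simp
    have "F2.fq x0 c = F2.fq x c + \<sigma>2 t * g" unfolding x0_def g_def by (simp add: F2.f_add1 F2.f_sml gcc)
    also have "\<dots> = F2.fq x c + g * (\<sigma>1 t * (inverse g * g))" unfolding sig[of t] by (simp add: mult.assoc)
    also have "\<dots> = F2.fq x c - g * F1.fq x c" unfolding t using g0 by simp
    finally have "F2.fq x c = g * F1.fq x c" using k by simp
    then show ?thesis using pa by simp
  qed
  have Qrel: "F2.Q x - g * F1.Q x \<in> F2.Rp" for x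
  proof -
    obtain s where s: "\<sigma>1 s = 1 - F1.fq x c" using F1.surj by blast
    define t where "t = - F1.Q x - F1.fq x a * s"
    define y where "y = x + (sm a s + sm c t)"
    have m1: "F1.Q y - (F1.Q x + \<sigma>1 s * F1.fq a c * t + F1.fq x a * s + F1.fq x c * t) \<in> F1.Rp"
      unfolding y_def by (rule F1.Q_plus_comb[OF Za Zc])
    have "F1.Q x + \<sigma>1 s * F1.fq a c * t + F1.fq x a * s + F1.fq x c * t = 0"
      unfolding s fac t_def by (simp add: algebra_simps)
    then have "F1.Q y \<in> F1.Rp" using m1 by simp
    then have Zy2: "F2.Q y \<in> F2.Rp" using Zeq by blast
    have m2: "F2.Q y - (F2.Q x + \<sigma>2 s * F2.fq a c * t + F2.fq x a * s + F2.fq x c * t) \<in> F2.Rp"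
      unfolding y_def by (rule F2.Q_plus_comb[OF Za2 Zc2])
    have "\<sigma>2 s * F2.fq a c * t + F2.fq x a * s + F2.fq x c * t
        = g * (\<sigma>1 s * t + F1.fq x a * s + F1.fq x c * t)"
      unfolding sig[of s] g_def[symmetric] using prp[of x] g0 by (simp add: algebra_simps inv_c1)
    also have "\<sigma>1 s * t + F1.fq x a * s + F1.fq x c * t = - F1.Q x"
      unfolding s t_def by (simp add: algebra_simps)
    finally have "F2.Q x + \<sigma>2 s * F2.fq a c * t + F2.fq x a * s + F2.fq x c * t = F2.Q x - g * F1.Q x"
      by (simp add: algebra_simps)
    then have "F2.Q y - (F2.Q x - g * F1.Q x) \<in> F2.Rp" using m2 by (simp only: add.assoc)
    then show ?thesis using F2.Rp_shift Zy2 by blast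
  qed
  show ?thesis using g0 sig eps Rrel Qrel by blast
qed

end


context gqf
begin

abbreviation "PP \<equiv> Sq_points sm q Rb"
abbreviation "LL \<equiv> Sq_lines sm q Rb"

lemma ptP_Q: "pt sm x \<in> PP \<Longrightarrow> Q x \<in> Rp"
proof -
  assume "pt sm x \<in> PP"
  then obtain y where y: "pt sm x = pt sm y" "y \<noteq> 0" "q y = Rb" unfolding Sq_points_def by blast
  obtain l where l: "x = sm y l" using pt_eq[OF y(1)] by blast
  have "Q y \<in> Rp" using y(3) sing by simp
  then show "Q x \<in> Rp" unfolding l by (rule Z_scale)
qed

lemma Q_ptP: "x \<noteq> 0 \<Longrightarrow> Q x \<in> Rp \<Longrightarrow> pt sm x \<in> PP"
  unfolding Sq_points_def using sing by blast

lemma pline_P: "Q x \<in> Rp \<Longrightarrow> Q z \<in> Rp \<Longrightarrow> fq x z = 0 \<Longrightarrow> pline sm x z \<subseteq> PP"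
proof
  fix p assume x: "Q x \<in> Rp" and z: "Q z \<in> Rp" and f: "fq x z = 0" and p: "p \<in> pline sm x z"
  then obtain a b where ab: "p = pt sm (sm x a + sm z b)" "sm x a + sm z b \<noteq> 0" unfolding pline_def by blast
  have "Q (sm x a + sm z b) \<in> Rp" by (rule Zlem_zero[OF x z f])
  then show "p \<in> PP" using Q_ptP ab by simp
qed

lemma pt_in_pline1: "x \<noteq> 0 \<Longrightarrow> pt sm x \<in> pline sm x z"
  unfolding pline_def by (rule CollectI, rule exI[of _ 1], rule exI[of _ 0]) simp
lemma pt_in_pline2: "z \<noteq> 0 \<Longrightarrow> pt sm z \<in> pline sm x z"
  unfolding pline_def by (rule CollectI, rule exI[of _ 0], rule exI[of _ 1]) simp

lemma notcoll:
  assumes x: "Q x \<in> Rp" and z: "Q z \<in> Rp" and x0: "x \<noteq> 0" and z0: "z \<noteq> 0"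
    and nc: "\<not> collinear LL (pt sm x) (pt sm z)"
  shows "fq x z \<noteq> 0"
proof
  assume f: "fq x z = 0"
  have ne: "pt sm x \<noteq> pt sm z" using nc unfolding collinear_def by blast
  have "pline sm x z \<in> LL" unfolding Sq_lines_def using x0 z0 ne pline_P[OF x z f] by blast
  then show False using nc pt_in_pline1[OF x0] pt_in_pline2[OF z0] unfolding collinear_def by blast
qed

lemma nonrad_partner:
  assumes p: "pt sm x \<in> PP" and x0: "x \<noteq> 0" and nr: "pt sm x \<notin> radical PP LL" and nt: "s \<notin> Rp"
  shows "\<exists>z. Q z \<in> Rp \<and> fq x z \<noteq> 0"
proof -
  obtain r where r: "r \<in> PP" "\<not> collinear LL (pt sm x) r" using p nr unfolding radical_def by blast
  then obtain z where z: "r = pt sm z" "z \<noteq> 0" "q z = Rb" unfolding Sq_points_def by blast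
  have Qz: "Q z \<in> Rp" using z(3) sing by simp
  have "fq x z \<noteq> 0" by (rule notcoll[OF ptP_Q[OF p] Qz x0 z(2)]) (use r z in simp)
  then show ?thesis using Qz by blast
qed

lemma rank_line:
  assumes "nondeg_rank_ge2 (Sq sm q Rb)"
  shows "\<exists>l\<in>LL. l \<inter> radical PP LL = {}"
proof -
  have "rank_ge2 (quot_points PP LL) (quot_lines PP LL)" using assms by (simp add: nondeg_rank_ge2_def Sq_def)
  then obtain X0 X1 where X: "singular_subspace (quot_points PP LL) (quot_lines PP LL) X0"
    "singular_subspace (quot_points PP LL) (quot_lines PP LL) X1" "{} \<subset> X0" "X0 \<subset> X1"
    unfolding rank_ge2_def by blast
  obtain p where p: "p \<in> X0" using X(3) by blast
  obtain r where r: "r \<in> X1" "r \<notin> X0" using X(4) by blast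
  have "p \<in> X1" using p X(4) by blast
  then have "collinear (quot_lines PP LL) p r" using X(2) r(1) unfolding singular_subspace_def by blast
  moreover have "p \<noteq> r" using p r by blast
  ultimately obtain l' where "l' \<in> quot_lines PP LL" unfolding collinear_def by blast
  then show ?thesis unfolding quot_lines_def by blast
qed

lemma frame:
  assumes rk: "nondeg_rank_ge2 (Sq sm q Rb)" and nt: "s \<notin> Rp"
  shows "\<exists>a b c d. Q a \<in> Rp \<and> Q b \<in> Rp \<and> Q c \<in> Rp \<and> Q d \<in> Rp \<and>
     fq a b = 0 \<and> fq c d = 0 \<and> fq a d = 0 \<and> fq b c = 0 \<and> fq a c = 1 \<and> fq b d = 1"
proof -
  obtain l where l: "l \<in> LL" "l \<inter> radical PP LL = {}" using rank_line[OF rk] by blast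
  then obtain a b where ab: "l = pline sm a b" "a \<noteq> 0" "b \<noteq> 0" "pt sm a \<noteq> pt sm b" "pline sm a b \<subseteq> PP"
    unfolding Sq_lines_def by blast
  have Qa: "Q a \<in> Rp" using ab pt_in_pline1[OF ab(2)] ptP_Q by blast
  have Qb: "Q b \<in> Rp" using ab pt_in_pline2[OF ab(3)] ptP_Q by blast
  have all: "\<forall>x y. Q (sm a x + sm b y) \<in> Rp"
  proof (intro allI)
    fix x y
    show "Q (sm a x + sm b y) \<in> Rp"
    proof (cases "sm a x + sm b y = 0")
      case True then show ?thesis using Q_zero by simp
    next
      case False
      then have "pt sm (sm a x + sm b y) \<in> pline sm a b" unfolding pline_def by blast
      then show ?thesis using ab(5) ptP_Q by blast
    qed
  qed
  have fab: "fq a b = 0" using fzero_char[OF Qa Qb nt] all by blast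
  have faa: "fq a a = 0" by (rule f_self[OF Qa nt])
  have fbb: "fq b b = 0" by (rule f_self[OF Qb nt])
  have "pt sm a \<notin> radical PP LL" using l(2) ab(1) pt_in_pline1[OF ab(2)] by blast
  then obtain c0 where c0: "Q c0 \<in> Rp" "fq a c0 \<noteq> 0"
    using nonrad_partner[OF _ ab(2) _ nt] ab(5) pt_in_pline1[OF ab(2)] by blast
  define c where "c = sm c0 (inverse (fq a c0))"
  have Qc: "Q c \<in> Rp" unfolding c_def by (rule Z_scale[OF c0(1)])
  have fac: "fq a c = 1" unfolding c_def using c0(2) by (simp add: f_smr)
  have fcc: "fq c c = 0" by (rule f_self[OF Qc nt])
  have fca: "fq c a = \<epsilon>" using f_sym[where x=a and y=c] fac by simp
  obtain mu where mu: "\<sigma> mu = fq b c" using surj by blast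
  define b' where "b' = sm a (- mu) + sm b 1"
  have Qb': "Q b' \<in> Rp" unfolding b'_def by (rule Zlem_zero[OF Qa Qb fab])
  have fb'c: "fq b' c = 0" unfolding b'_def by (simp add: f_add1 f_sml fac mu)
  have fab': "fq a b' = 0" unfolding b'_def by (simp add: f_add2 f_smr faa fab)
  have fb'a: "fq b' a = 0" using f_sym[where x=a and y=b'] fab' by simp
  have fcb': "fq c b' = 0" using f_sym[where x=b' and y=c] fb'c by simp
  have fb'b': "fq b' b' = 0" by (rule f_self[OF Qb' nt])
  have b'0: "b' \<noteq> 0"
  proof
    assume "b' = 0"
    then have "sm a (- mu) + b = 0" unfolding b'_def by simp
    then have "- sm a (- mu) = b" by (rule minus_unique)
    then have "b = - sm a (- mu)" by simp
    then have bm: "b = sm a mu" by (simp add: sm_minuss)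
    show False
    proof (cases "mu = 0")
      case True then show False using bm ab(3) by simp
    next
      case False then show False using bm ab(4) pt_scale by simp
    qed
  qed
  have "pt sm b' \<in> l" unfolding ab(1) pline_def b'_def using b'0 unfolding b'_def by blast
  then have b'l: "pt sm b' \<in> PP" "pt sm b' \<notin> radical PP LL" using l(2) ab(1,5) by blast+
  then obtain d0 where d0: "Q d0 \<in> Rp" "fq b' d0 \<noteq> 0"
    using nonrad_partner[OF _ b'0 _ nt] by blast
  define ga where "ga = fq a d0"
  define al where "al = inverse \<epsilon> * fq c d0"
  define d' where "d' = d0 + (sm a (- al) + sm c (- ga))"
  have fad': "fq a d' = 0" unfolding d'_def ga_def by (simp add: f_add2 f_smr faa fac)
  have fcd': "fq c d' = 0" unfolding d'_def al_def using e0 by (simp add: f_add2 f_smr fca fcc mult.assoc[symmetric])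
  have fb'd': "fq b' d' = fq b' d0" unfolding d'_def by (simp add: f_add2 f_smr fb'a fb'c)
  have fd'b': "fq d' b' \<noteq> 0" using f_sym[where x=b' and y=d'] fb'd' d0(2) e0 by simp
  define tau where "tau = - (inverse (fq d' b') * Q d')"
  define d'' where "d'' = d' + (sm b' tau + sm a 0)"
  have m: "Q d'' - (Q d' + \<sigma> tau * fq b' a * 0 + fq d' b' * tau + fq d' a * 0) \<in> Rp"
    unfolding d''_def by (rule Q_plus_comb[OF Qb' Qa])
  have "Q d' + \<sigma> tau * fq b' a * 0 + fq d' b' * tau + fq d' a * 0 = 0"
    unfolding tau_def using fd'b' by (simp add: mult.assoc[symmetric])
  then have Qd'': "Q d'' \<in> Rp" using m by simp
  have fad'': "fq a d'' = 0" unfolding d''_def by (simp add: f_add2 f_smr fad' fab')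
  have fcd'': "fq c d'' = 0" unfolding d''_def by (simp add: f_add2 f_smr fcd' fcb')
  have fb'd'': "fq b' d'' = fq b' d0" unfolding d''_def by (simp add: f_add2 f_smr fb'd' fb'b')
  define d where "d = sm d'' (inverse (fq b' d0))"
  have Qd: "Q d \<in> Rp" unfolding d_def by (rule Z_scale[OF Qd''])
  have "fq a d = 0" "fq c d = 0" "fq b' d = 1"
    unfolding d_def using fad'' fcd'' fb'd'' d0(2) by (simp_all add: f_smr)
  then show ?thesis using Qa Qb' Qc Qd fab' fac fb'c by blast
qed

lemma Zpt: "Q x \<in> Rp \<longleftrightarrow> (x = 0 \<or> pt sm x \<in> PP)"
  using Q_zero ptP_Q Q_ptP by blast

end


lemma img_plus: "(\<lambda>k. (c::'k::ring) * k) ` (A + B) = (\<lambda>k. c * k) ` A + (\<lambda>k. c * k) ` B"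
proof (rule set_eqI)
  fix x
  show "x \<in> (\<lambda>k. c * k) ` (A + B) \<longleftrightarrow> x \<in> (\<lambda>k. c * k) ` A + (\<lambda>k. c * k) ` B"
  proof
    assume "x \<in> (\<lambda>k. c * k) ` (A + B)"
    then obtain a b where "a \<in> A" "b \<in> B" "x = c * (a + b)" by (auto elim!: set_plus_elim)
    then show "x \<in> (\<lambda>k. c * k) ` A + (\<lambda>k. c * k) ` B"
      by (simp add: distrib_left set_plus_intro)
  next
    assume "x \<in> (\<lambda>k. c * k) ` A + (\<lambda>k. c * k) ` B"
    then obtain a b where ab: "a \<in> A" "b \<in> B" "x = c * a + c * b" by (auto elim!: set_plus_elim)
    then have "x = c * (a + b)" by (simp add: distrib_left)
    moreover have "a + b \<in> A + B" by (rule set_plus_intro[OF ab(1) ab(2)])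
    ultimately show "x \<in> (\<lambda>k. c * k) ` (A + B)" by blast
  qed
qed

lemma img_elt: "(\<lambda>k. (c::'k::ring) * k) ` (t +o S) = (c * t) +o ((\<lambda>k. c * k) ` S)"
proof (rule set_eqI)
  fix x
  show "x \<in> (\<lambda>k. c * k) ` (t +o S) \<longleftrightarrow> x \<in> (c * t) +o ((\<lambda>k. c * k) ` S)"
  proof
    assume "x \<in> (\<lambda>k. c * k) ` (t +o S)"
    then obtain b where b: "b \<in> S" "x = c * (t + b)" unfolding elt_set_plus_def by blast
    then have "c * b \<in> (\<lambda>k. c * k) ` S" "x = c * t + c * b" by (auto simp: distrib_left)
    then show "x \<in> (c * t) +o ((\<lambda>k. c * k) ` S)" unfolding elt_set_plus_def by blast
  next
    assume "x \<in> (c * t) +o ((\<lambda>k. c * k) ` S)"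
    then obtain b where b: "b \<in> S" "x = c * t + c * b" unfolding elt_set_plus_def by blast
    then have "t + b \<in> t +o S" "x = c * (t + b)" unfolding elt_set_plus_def by (auto simp: distrib_left)
    then show "x \<in> (\<lambda>k. c * k) ` (t +o S)" by blast
  qed
qed

lemma img_elt_sets: "(\<lambda>X. (\<lambda>k. (c::'k::ring) * k) ` X) ` (A +o R)
   = ((\<lambda>k. c * k) ` A) +o ((\<lambda>X. (\<lambda>k. c * k) ` X) ` R)"
proof (rule set_eqI)
  fix x
  show "x \<in> (\<lambda>X. (\<lambda>k. c * k) ` X) ` (A +o R) \<longleftrightarrow>
        x \<in> ((\<lambda>k. c * k) ` A) +o ((\<lambda>X. (\<lambda>k. c * k) ` X) ` R)"
  proof
    assume "x \<in> (\<lambda>X. (\<lambda>k. c * k) ` X) ` (A +o R)"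
    then obtain B where b: "B \<in> R" "x = (\<lambda>k. c * k) ` (A + B)" unfolding elt_set_plus_def by blast
    then have "(\<lambda>k. c * k) ` B \<in> (\<lambda>X. (\<lambda>k. c * k) ` X) ` R" "x = (\<lambda>k. c * k) ` A + (\<lambda>k. c * k) ` B"
      by (auto simp: img_plus)
    then show "x \<in> ((\<lambda>k. c * k) ` A) +o ((\<lambda>X. (\<lambda>k. c * k) ` X) ` R)" unfolding elt_set_plus_def by blast
  next
    assume "x \<in> ((\<lambda>k. c * k) ` A) +o ((\<lambda>X. (\<lambda>k. c * k) ` X) ` R)"
    then obtain B where b: "B \<in> R" "x = (\<lambda>k. c * k) ` A + (\<lambda>k. c * k) ` B" unfolding elt_set_plus_def by blast
    then have "A + B \<in> A +o R" "x = (\<lambda>k. c * k) ` (A + B)" unfolding elt_set_plus_def by (auto simp: img_plus)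
    then show "x \<in> (\<lambda>X. (\<lambda>k. c * k) ` X) ` (A +o R)" by blast
  qed
qed

lemma Ksig_map:
  fixes \<kappa> :: "'k::division_ring"
  assumes aa: "anti_automorphism \<sigma>1" and k0: "\<kappa> \<noteq> 0"
    and sig: "\<forall>t. \<sigma>2 t = \<kappa> * \<sigma>1 t * inverse \<kappa>" and eps: "\<epsilon>2 = \<kappa> * \<sigma>1 (inverse \<kappa>) * \<epsilon>1"
  shows "(\<lambda>k. \<kappa> * k) ` Ksig \<sigma>1 \<epsilon>1 = Ksig \<sigma>2 \<epsilon>2"
proof -
  interpret A: antiaut \<sigma>1 by (rule antiaut.intro[OF aa])
  have key: "\<sigma>2 (\<kappa> * t) * \<epsilon>2 = \<kappa> * (\<sigma>1 t * \<epsilon>1)" for t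
  proof -
    have "\<sigma>2 (\<kappa> * t) * \<epsilon>2 = \<kappa> * (\<sigma>1 t * ((\<sigma>1 \<kappa> * (inverse \<kappa> * \<kappa>)) * inverse (\<sigma>1 \<kappa>)) * \<epsilon>1)"
      unfolding eps sig[rule_format] by (simp add: mult.assoc)
    also have "\<dots> = \<kappa> * (\<sigma>1 t * \<epsilon>1)" using k0 by simp
    finally show ?thesis .
  qed
  show ?thesis
  proof (rule set_eqI)
    fix x
    show "x \<in> (\<lambda>k. \<kappa> * k) ` Ksig \<sigma>1 \<epsilon>1 \<longleftrightarrow> x \<in> Ksig \<sigma>2 \<epsilon>2"
    proof
      assume "x \<in> (\<lambda>k. \<kappa> * k) ` Ksig \<sigma>1 \<epsilon>1"
      then obtain t where t: "x = \<kappa> * (t - \<sigma>1 t * \<epsilon>1)" unfolding Ksig_def by auto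
      have "x = \<kappa> * t - \<sigma>2 (\<kappa> * t) * \<epsilon>2" unfolding t key by (simp add: right_diff_distrib)
      then show "x \<in> Ksig \<sigma>2 \<epsilon>2" unfolding Ksig_def by blast
    next
      assume "x \<in> Ksig \<sigma>2 \<epsilon>2"
      then obtain u where u: "x = u - \<sigma>2 u * \<epsilon>2" unfolding Ksig_def by auto
      define t where "t = inverse \<kappa> * u"
      have ut: "u = \<kappa> * t" unfolding t_def using k0 by (simp add: inv_c2)
      have "x = \<kappa> * (t - \<sigma>1 t * \<epsilon>1)" unfolding u ut key by (simp add: right_diff_distrib)
      moreover have "t - \<sigma>1 t * \<epsilon>1 \<in> Ksig \<sigma>1 \<epsilon>1" unfolding Ksig_def by blast
      ultimately show "x \<in> (\<lambda>k. \<kappa> * k) ` Ksig \<sigma>1 \<epsilon>1" by blast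
    qed
  qed
qed

theorem mainTheorem12:
  fixes sm :: "'v::ab_group_add \<Rightarrow> 'k::division_ring \<Rightarrow> 'v"
    and \<sigma>1 \<sigma>2 :: "'k \<Rightarrow> 'k" and \<epsilon>1 \<epsilon>2 :: 'k
    and R1 R2 :: "'k set set"
    and q1 q2 :: "'v \<Rightarrow> 'k set set"
  assumes V: "right_vector_space sm"
    and adm1: "admissible \<sigma>1 \<epsilon>1"
    and adm2: "admissible \<sigma>2 \<epsilon>2"
    and q1: "gen_quadratic_form sm \<sigma>1 \<epsilon>1 R1 q1"
    and q2: "gen_quadratic_form sm \<sigma>2 \<epsilon>2 R2 q2"
    and nt1: "nontrivial_qform q1 R1"
    and nt2: "nontrivial_qform q2 R2"
    and same: "Sq sm q1 R1 = Sq sm q2 R2"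
    and rk: "nondeg_rank_ge2 (Sq sm q1 R1)"
  shows "\<exists>\<kappa>. \<kappa> \<noteq> 0 \<and>
           (\<forall>t. \<sigma>2 t = \<kappa> * \<sigma>1 t * inverse \<kappa>) \<and>
           \<epsilon>2 = \<kappa> * \<sigma>1 (inverse \<kappa>) * \<epsilon>1 \<and>
           R2 = (\<lambda>X. (\<lambda>k. \<kappa> * k) ` X) ` R1 \<and>
           (\<forall>x. q2 x = (\<lambda>X. (\<lambda>k. \<kappa> * k) ` X) ` q1 x)"
proof -
  have aa1: "anti_automorphism \<sigma>1" using adm1 by (simp add: admissible_def)
  have aa2: "anti_automorphism \<sigma>2" using adm2 by (simp add: admissible_def)
  interpret F1: gqf sm \<sigma>1 \<epsilon>1 R1 q1
    by (intro gqf.intro vs.intro admpair.intro antiaut.intro admpair_axioms.intro gqf_axioms.intro V aa1 adm1 q1)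
  interpret F2: gqf sm \<sigma>2 \<epsilon>2 R2 q2
    by (intro gqf.intro vs.intro admpair.intro antiaut.intro admpair_axioms.intro gqf_axioms.intro V aa2 adm2 q2)
  obtain s1 where s1: "s1 \<notin> F1.Rp" using F1.nontriv[OF nt1] by blast
  obtain s2 where s2: "s2 \<notin> F2.Rp" using F2.nontriv[OF nt2] by blast
  have SP: "Sq_points sm q1 R1 = Sq_points sm q2 R2" using same by (simp add: Sq_def)
  have Zeq: "F1.Q x \<in> F1.Rp \<longleftrightarrow> F2.Q x \<in> F2.Rp" for x
    using F1.Zpt[of x] F2.Zpt[of x] SP by simp
  interpret T: two sm \<sigma>1 \<epsilon>1 R1 q1 \<sigma>2 \<epsilon>2 R2 q2 s1 s2
    by (intro two.intro two_axioms.intro F1.gqf_axioms F2.gqf_axioms Zeq s1 s2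
        gqf.intro vs.intro admpair.intro antiaut.intro admpair_axioms.intro gqf_axioms.intro V aa1 adm1 q1 aa2 adm2 q2)
  obtain a b c d where fr: "F1.Q a \<in> F1.Rp" "F1.Q b \<in> F1.Rp" "F1.Q c \<in> F1.Rp" "F1.Q d \<in> F1.Rp"
     "F1.fq a b = 0" "F1.fq c d = 0" "F1.fq a d = 0" "F1.fq b c = 0" "F1.fq a c = 1" "F1.fq b d = 1"
    using F1.frame[OF rk s1] by blast
  obtain \<kappa> where k0: "\<kappa> \<noteq> 0" and sig: "\<forall>t. \<sigma>2 t = \<kappa> * \<sigma>1 t * inverse \<kappa>"
    and eps: "\<epsilon>2 = \<kappa> * \<sigma>1 (inverse \<kappa>) * \<epsilon>1"
    and Rrel: "\<forall>t. t \<in> F1.Rp \<longleftrightarrow> \<kappa> * t \<in> F2.Rp" and Qrel: "\<forall>x. F2.Q x - \<kappa> * F1.Q x \<in> F2.Rp"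
    using T.core[OF fr] by blast
  define M where "M = (\<lambda>X. (\<lambda>k. \<kappa> * k) ` X)"
  have Ks: "(\<lambda>k. \<kappa> * k) ` Ksig \<sigma>1 \<epsilon>1 = Ksig \<sigma>2 \<epsilon>2" by (rule Ksig_map[OF aa1 k0 sig eps])
  have Mk: "M (kbar \<sigma>1 \<epsilon>1 t) = kbar \<sigma>2 \<epsilon>2 (\<kappa> * t)" for t
    unfolding M_def kbar_def img_elt Ks ..
  have Rp2: "F2.Rp = (\<lambda>t. \<kappa> * t) ` F1.Rp"
  proof (rule set_eqI)
    fix u
    show "u \<in> F2.Rp \<longleftrightarrow> u \<in> (\<lambda>t. \<kappa> * t) ` F1.Rp"
    proof
      assume "u \<in> F2.Rp"
      moreover have "u = \<kappa> * (inverse \<kappa> * u)" using k0 by (simp add: inv_c2)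
      ultimately have "inverse \<kappa> * u \<in> F1.Rp" using Rrel by metis
      then show "u \<in> (\<lambda>t. \<kappa> * t) ` F1.Rp" using \<open>u = \<kappa> * (inverse \<kappa> * u)\<close> by blast
    next
      assume "u \<in> (\<lambda>t. \<kappa> * t) ` F1.Rp"
      then show "u \<in> F2.Rp" using Rrel by blast
    qed
  qed
  have R: "R2 = M ` R1"
  proof -
    have "M ` R1 = M ` (kbar \<sigma>1 \<epsilon>1 ` F1.Rp)" using F1.Rb_eq by simp
    also have "\<dots> = kbar \<sigma>2 \<epsilon>2 ` ((\<lambda>t. \<kappa> * t) ` F1.Rp)" by (auto simp: Mk image_image)
    also have "\<dots> = R2" using F2.Rb_eq Rp2 by simp
    finally show ?thesis by simp
  qed
  have Q: "q2 x = M ` q1 x" for x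
  proof -
    have "M ` q1 x = M ` (kbar \<sigma>1 \<epsilon>1 (F1.Q x) +o R1)" using F1.q_Q by simp
    also have "\<dots> = kbar \<sigma>2 \<epsilon>2 (\<kappa> * F1.Q x) +o R2"
      unfolding M_def img_elt_sets using Mk R unfolding M_def by simp
    also have "\<dots> = kbar \<sigma>2 \<epsilon>2 (F2.Q x) +o R2"
      using F2.coset_eq Qrel by blast
    also have "\<dots> = q2 x" using F2.q_Q by simp
    finally show ?thesis by simp
  qed
  show ?thesis using k0 sig eps R Q unfolding M_def by blast
qed

end
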